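(* Let $n\ge 2$. The monoid homomorphism $VSB_n\to VSG_n$ sending each generator $\sigma_i,\sigma_i^{-1},v_i,\tau_i$ ($1\le i\le n-1$) of $VSB_n$ to the element of $VSG_n$ with the same name (with $\sigma_i^{-1}$ sent to the group inverse of $\sigma_i$) is injective. That is, the virtual singular braid monoid $VSB_n$ embeds in the virtual singular braid group $VSG_n$.
   Context: Let $n\ge 2$. The virtual singular braid monoid $VSB_n$ is the monoid generated by $\sigma_i,\sigma_i^{-1},v_i,\tau_i$ ($1\le i\le n-1$) subject to the relations: $\sigma_i\sigma_i^{-1}=\sigma_i^{-1}\sigma_i=1$; $v_i^2=1$; $\sigma_i\tau_i=\tau_i\sigma_i$; for $|i-j|=1$: $\sigma_i\sigma_j\sigma_i=\sigma_j\sigma_i\sigma_j$, $v_iv_jv_i=v_jv_iv_j$, $v_i\sigma_jv_i=v_j\sigma_iv_j$, $v_i\tau_jv_i=v_j\tau_iv_j$, $\sigma_i\sigma_j\tau_i=\tau_j\sigma_i\sigma_j$; and for $|i-j|>1$: $g_ih_j=h_jg_i$ for all $g_i,h_i\in\{\sigma_i,\tau_i,v_i\}$. The virtual singular braid group $VSG_n$ is the group generated by $\sigma_i,v_i,\tau_i$ ($1\le i\le n-1$) subject to the same relations (regarded as group relations); equivalently, it is obtained from $VSB_n$ by adjoining elements $\bar\tau_i$ with $\tau_i\bar\tau_i=\bar\tau_i\tau_i=1$ and the relations obtained by replacing $\tau_i$ by $\bar\tau_i$ in each relation involving $\tau_i$. We write $\bar\tau_i=\tau_i^{-1}$. *)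

theory Defs
  imports Main
begin

inductive pres_eq :: "('a list \<times> 'a list) set \<Rightarrow> 'a set \<Rightarrow> 'a list \<Rightarrow> 'a list \<Rightarrow> bool"
  for R :: "('a list \<times> 'a list) set" and A :: "'a set" where
  refl: "set u \<subseteq> A \<Longrightarrow> pres_eq R A u u"
| sym: "pres_eq R A u w \<Longrightarrow> pres_eq R A w u"
| trans: "pres_eq R A u v \<Longrightarrow> pres_eq R A v w \<Longrightarrow> pres_eq R A u w"
| step: "(l, r) \<in> R \<Longrightarrow> set x \<subseteq> A \<Longrightarrow> set y \<subseteq> A \<Longrightarrow> pres_eq R A (x @ l @ y) (x @ r @ y)"

datatype kind = KSig | KV | KTau

datatype mgen = MG kind nat | MSigInv nat

text \<open>Letters of group words for VSG_n: (k, i, False) is the generator k_i,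
  (k, i, True) is its group inverse.\<close>
type_synonym gletter = "kind \<times> nat \<times> bool"

definition idx :: "nat \<Rightarrow> nat set" where
  "idx n = {1..n - 1}"

definition adj :: "nat \<Rightarrow> nat \<Rightarrow> bool" where
  "adj i j \<longleftrightarrow> i = j + 1 \<or> j = i + 1"

definition far :: "nat \<Rightarrow> nat \<Rightarrow> bool" where
  "far i j \<longleftrightarrow> i + 1 < j \<or> j + 1 < i"

definition basic_rels :: "nat \<Rightarrow> ((kind \<times> nat) list \<times> (kind \<times> nat) list) set" where
  "basic_rels n =
     {([(KV, i), (KV, i)], []) | i. i \<in> idx n}
   \<union> {([(KSig, i), (KTau, i)], [(KTau, i), (KSig, i)]) | i. i \<in> idx n}
   \<union> {([(KSig, i), (KSig, j), (KSig, i)], [(KSig, j), (KSig, i), (KSig, j)]) | i j. i \<in> idx n \<and> j \<in> idx n \<and> adj i j}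
   \<union> {([(KV, i), (KV, j), (KV, i)], [(KV, j), (KV, i), (KV, j)]) | i j. i \<in> idx n \<and> j \<in> idx n \<and> adj i j}
   \<union> {([(KV, i), (KSig, j), (KV, i)], [(KV, j), (KSig, i), (KV, j)]) | i j. i \<in> idx n \<and> j \<in> idx n \<and> adj i j}
   \<union> {([(KV, i), (KTau, j), (KV, i)], [(KV, j), (KTau, i), (KV, j)]) | i j. i \<in> idx n \<and> j \<in> idx n \<and> adj i j}
   \<union> {([(KSig, i), (KSig, j), (KTau, i)], [(KTau, j), (KSig, i), (KSig, j)]) | i j. i \<in> idx n \<and> j \<in> idx n \<and> adj i j}
   \<union> {([(g, i), (h, j)], [(h, j), (g, i)]) | g h i j. i \<in> idx n \<and> j \<in> idx n \<and> far i j}"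

definition vsb_alph :: "nat \<Rightarrow> mgen set" where
  "vsb_alph n = {MG k i | k i. i \<in> idx n} \<union> {MSigInv i | i. i \<in> idx n}"

definition vsb_rels :: "nat \<Rightarrow> (mgen list \<times> mgen list) set" where
  "vsb_rels n =
     {([MG KSig i, MSigInv i], []) | i. i \<in> idx n}
   \<union> {([MSigInv i, MG KSig i], []) | i. i \<in> idx n}
   \<union> {(map (\<lambda>(k, i). MG k i) l, map (\<lambda>(k, i). MG k i) r) | l r. (l, r) \<in> basic_rels n}"

definition vsb_eq :: "nat \<Rightarrow> mgen list \<Rightarrow> mgen list \<Rightarrow> bool" where
  "vsb_eq n = pres_eq (vsb_rels n) (vsb_alph n)"

definition vsg_alph :: "nat \<Rightarrow> gletter set" where
  "vsg_alph n = {(k, i, b) | k i b. i \<in> idx n}"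

definition vsg_rels :: "nat \<Rightarrow> (gletter list \<times> gletter list) set" where
  "vsg_rels n =
     {([(k, i, b), (k, i, \<not> b)], []) | k i b. i \<in> idx n}
   \<union> {(map (\<lambda>(k, i). (k, i, False)) l, map (\<lambda>(k, i). (k, i, False)) r) | l r. (l, r) \<in> basic_rels n}"

definition vsg_eq :: "nat \<Rightarrow> gletter list \<Rightarrow> gletter list \<Rightarrow> bool" where
  "vsg_eq n = pres_eq (vsg_rels n) (vsg_alph n)"

fun phi_letter :: "mgen \<Rightarrow> gletter list" where
  "phi_letter (MG k i) = [(k, i, False)]"
| "phi_letter (MSigInv i) = [(KSig, i, True)]"

definition phi :: "mgen list \<Rightarrow> gletter list" where
  "phi w = concat (map phi_letter w)"

end

theory Submission
  imports Defs
begin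

lemma pres_eq_set:
  assumes "pres_eq R A u w" "\<And>l r. (l,r) \<in> R \<Longrightarrow> set l \<subseteq> A \<and> set r \<subseteq> A"
  shows "set u \<subseteq> A \<and> set w \<subseteq> A"
  using assms(1) by induction (use assms(2) in fastforce)+

lemma pres_eq_ctx:
  assumes "pres_eq R A u w" "set x \<subseteq> A" "set y \<subseteq> A"
  shows "pres_eq R A (x@u@y) (x@w@y)"
  using assms
proof (induction arbitrary: x y rule: pres_eq.induct)
  case (refl u) thus ?case by (intro pres_eq.refl) auto
next
  case sym thus ?case by (blast intro: pres_eq.sym)
next
  case trans thus ?case by (blast intro: pres_eq.trans)
next
  case (step l r x' y')
  have "pres_eq R A ((x@x')@l@(y'@y)) ((x@x')@r@(y'@y))" by (rule pres_eq.step) (use step in auto)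
  thus ?case by simp
qed

definition mg :: "kind \<times> nat \<Rightarrow> mgen" where "mg = (\<lambda>(k,i). MG k i)"

lemma basic_idx: "(l,r) \<in> basic_rels n \<Longrightarrow> (\<forall>(k,i)\<in>set l. i \<in> idx n) \<and> (\<forall>(k,i)\<in>set r. i \<in> idx n)"
  unfolding basic_rels_def by auto

lemma vsb_rels_set: "(l,r) \<in> vsb_rels n \<Longrightarrow> set l \<subseteq> vsb_alph n \<and> set r \<subseteq> vsb_alph n"
  unfolding vsb_rels_def vsb_alph_def
  apply (elim UnE; clarsimp)
  apply (drule basic_idx) by fastforce

lemma E_set: "vsb_eq n u w \<Longrightarrow> set u \<subseteq> vsb_alph n \<and> set w \<subseteq> vsb_alph n"
  unfolding vsb_eq_def using pres_eq_set vsb_rels_set by metis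

lemma E_refl: "set u \<subseteq> vsb_alph n \<Longrightarrow> vsb_eq n u u"
  unfolding vsb_eq_def by (rule pres_eq.refl)
lemma E_sym: "vsb_eq n u w \<Longrightarrow> vsb_eq n w u"
  unfolding vsb_eq_def by (rule pres_eq.sym)
lemma E_trans[trans]: "vsb_eq n u v \<Longrightarrow> vsb_eq n v w \<Longrightarrow> vsb_eq n u w"
  unfolding vsb_eq_def by (rule pres_eq.trans)
lemma E_app: "vsb_eq n u u' \<Longrightarrow> vsb_eq n w w' \<Longrightarrow> vsb_eq n (u@w) (u'@w')"
proof -
  assume a: "vsb_eq n u u'" "vsb_eq n w w'"
  have "vsb_eq n ([]@u@w) ([]@u'@w)" using a E_set unfolding vsb_eq_def
    by (intro pres_eq_ctx) auto
  moreover have "vsb_eq n (u'@w@[]) (u'@w'@[])" using a E_set unfolding vsb_eq_def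
    by (intro pres_eq_ctx) auto
  ultimately show ?thesis using E_trans[of n "u@w" "u'@w" "u'@w'"] by simp
qed

lemma E_rel: "(l,r) \<in> vsb_rels n \<Longrightarrow> vsb_eq n l r"
  unfolding vsb_eq_def using pres_eq.step[of l r "vsb_rels n" "[]" "vsb_alph n" "[]"] by simp

lemma E_basic: "(l,r) \<in> basic_rels n \<Longrightarrow> vsb_eq n (map mg l) (map mg r)"
  apply (rule E_rel) unfolding vsb_rels_def mg_def by blast

lemma alph_MG: "i \<in> idx n \<Longrightarrow> MG k i \<in> vsb_alph n" unfolding vsb_alph_def by auto
lemma alph_Inv: "i \<in> idx n \<Longrightarrow> MSigInv i \<in> vsb_alph n" unfolding vsb_alph_def by auto

lemma E_sinv1: "i \<in> idx n \<Longrightarrow> vsb_eq n [MG KSig i, MSigInv i] []"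
  apply (rule E_rel) unfolding vsb_rels_def by blast
lemma E_sinv2: "i \<in> idx n \<Longrightarrow> vsb_eq n [MSigInv i, MG KSig i] []"
  apply (rule E_rel) unfolding vsb_rels_def by blast
lemma E_vv: "i \<in> idx n \<Longrightarrow> vsb_eq n [MG KV i, MG KV i] []"
proof -
  assume "i \<in> idx n"
  hence "([(KV,i),(KV,i)],[]) \<in> basic_rels n" unfolding basic_rels_def by blast
  from E_basic[OF this] show ?thesis by (simp add: mg_def)
qed
lemma E_st: "i \<in> idx n \<Longrightarrow> vsb_eq n [MG KSig i, MG KTau i] [MG KTau i, MG KSig i]"
proof -
  assume "i \<in> idx n"
  hence "([(KSig,i),(KTau,i)],[(KTau,i),(KSig,i)]) \<in> basic_rels n" unfolding basic_rels_def by blast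
  from E_basic[OF this] show ?thesis by (simp add: mg_def)
qed
lemma E_sst: "i \<in> idx n \<Longrightarrow> j \<in> idx n \<Longrightarrow> adj i j \<Longrightarrow>
   vsb_eq n [MG KSig i, MG KSig j, MG KTau i] [MG KTau j, MG KSig i, MG KSig j]"
proof -
  assume "i \<in> idx n" "j \<in> idx n" "adj i j"
  hence "([(KSig,i),(KSig,j),(KTau,i)],[(KTau,j),(KSig,i),(KSig,j)]) \<in> basic_rels n" unfolding basic_rels_def by blast
  from E_basic[OF this] show ?thesis by (simp add: mg_def)
qed
lemma E_vtv: "i \<in> idx n \<Longrightarrow> j \<in> idx n \<Longrightarrow> adj i j \<Longrightarrow>
   vsb_eq n [MG KV i, MG KTau j, MG KV i] [MG KV j, MG KTau i, MG KV j]"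
proof -
  assume "i \<in> idx n" "j \<in> idx n" "adj i j"
  hence "([(KV,i),(KTau,j),(KV,i)],[(KV,j),(KTau,i),(KV,j)]) \<in> basic_rels n" unfolding basic_rels_def by blast
  from E_basic[OF this] show ?thesis by (simp add: mg_def)
qed
lemma E_far: "i \<in> idx n \<Longrightarrow> j \<in> idx n \<Longrightarrow> far i j \<Longrightarrow>
   vsb_eq n [MG g i, MG h j] [MG h j, MG g i]"
proof -
  assume "i \<in> idx n" "j \<in> idx n" "far i j"
  hence "([(g,i),(h,j)],[(h,j),(g,i)]) \<in> basic_rels n" unfolding basic_rels_def by blast
  from E_basic[OF this] show ?thesis by (simp add: mg_def)
qed


definition U :: "nat \<Rightarrow> mgen set" where
  "U n = {MG KSig i | i. i \<in> idx n} \<union> {MSigInv i | i. i \<in> idx n} \<union> {MG KV i | i. i \<in> idx n}"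

lemma U_alph: "U n \<subseteq> vsb_alph n" unfolding U_def vsb_alph_def by auto

fun invl :: "mgen \<Rightarrow> mgen" where
  "invl (MG KSig i) = MSigInv i" | "invl (MSigInv i) = MG KSig i" | "invl (MG k i) = MG k i"

definition inv :: "mgen list \<Rightarrow> mgen list" where "inv w = rev (map invl w)"

lemma inv_simps[simp]: "inv [] = []" "inv (c#w) = inv w @ [invl c]" "inv (w@w') = inv w' @ inv w"
  unfolding inv_def by auto

lemma invl_U: "c \<in> U n \<Longrightarrow> invl c \<in> U n" unfolding U_def by auto
lemma inv_U: "set w \<subseteq> U n \<Longrightarrow> set (inv w) \<subseteq> U n" unfolding inv_def using invl_U by auto

lemma E_letter_inv: "c \<in> U n \<Longrightarrow> vsb_eq n [c, invl c] [] \<and> vsb_eq n [invl c, c] []"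
  unfolding U_def using E_sinv1 E_sinv2 E_vv by auto

lemma E_inv: "set w \<subseteq> U n \<Longrightarrow> vsb_eq n (w @ inv w) [] \<and> vsb_eq n (inv w @ w) []"
proof (induction w)
  case Nil thus ?case by (simp add: E_refl)
next
  case (Cons c w)
  have cU: "c \<in> U n" and wU: "set w \<subseteq> U n" using Cons by auto
  have cA: "set [c] \<subseteq> vsb_alph n" "set [invl c] \<subseteq> vsb_alph n"
    using cU invl_U U_alph by auto
  have IH1: "vsb_eq n (w @ inv w) []" and IH2: "vsb_eq n (inv w @ w) []" using Cons.IH[OF wU] by auto
  have "vsb_eq n ([c] @ ((w @ inv w) @ [invl c])) ([c] @ ([] @ [invl c]))"
    by (rule E_app[OF E_refl E_app[OF IH1 E_refl]]) (use cA in auto)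
  hence "vsb_eq n ((c#w) @ inv (c#w)) [c, invl c]" by simp
  also have "vsb_eq n [c, invl c] []" using E_letter_inv[OF cU] by blast
  finally have 1: "vsb_eq n ((c#w) @ inv (c#w)) []" .
  have iA: "set (inv w) \<subseteq> vsb_alph n" "set w \<subseteq> vsb_alph n" using inv_U[OF wU] wU U_alph by auto
  have "vsb_eq n (inv w @ ([invl c, c] @ w)) (inv w @ ([] @ w))"
    by (rule E_app[OF E_refl E_app[OF _ E_refl]]) (use E_letter_inv[OF cU] iA in auto)
  hence "vsb_eq n (inv (c#w) @ (c#w)) (inv w @ w)" by simp
  also note IH2
  finally have 2: "vsb_eq n (inv (c#w) @ (c#w)) []" .
  show ?case using 1 2 by blast
qed

lemma E_inv_cong: "set w \<subseteq> U n \<Longrightarrow> set w' \<subseteq> U n \<Longrightarrow> vsb_eq n w w' \<Longrightarrow> vsb_eq n (inv w) (inv w')"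
proof -
  assume a: "set w \<subseteq> U n" "set w' \<subseteq> U n" "vsb_eq n w w'"
  have iA: "set (inv w) \<subseteq> vsb_alph n" "set (inv w') \<subseteq> vsb_alph n" using inv_U a U_alph by blast+
  have "vsb_eq n (inv w @ []) (inv w @ (w' @ inv w'))"
    by (rule E_app[OF E_refl E_sym]) (use E_inv[OF a(2)] iA in auto)
  hence "vsb_eq n (inv w) ((inv w @ w') @ inv w')" by simp
  also have "vsb_eq n ((inv w @ w') @ inv w') ((inv w @ w) @ inv w')"
    by (rule E_app[OF E_app[OF E_refl E_sym] E_refl]) (use a iA in auto)
  also have "vsb_eq n ((inv w @ w) @ inv w') ([] @ inv w')"
    by (rule E_app[OF _ E_refl]) (use E_inv[OF a(1)] iA in auto)
  finally show ?thesis by simp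
qed

lemma E_conj_helper:
  assumes "vsb_eq n ([h] @ t) (t @ [h])" "h \<in> U n"
  shows "vsb_eq n ([h] @ t @ [invl h]) t"
proof -
  have tA: "set t \<subseteq> vsb_alph n" using E_set[OF assms(1)] by simp
  have hA: "set [invl h] \<subseteq> vsb_alph n" using assms invl_U U_alph by auto
  have "vsb_eq n (([h] @ t) @ [invl h]) ((t @ [h]) @ [invl h])"
    by (rule E_app[OF assms(1) E_refl[OF hA]])
  hence "vsb_eq n ([h] @ t @ [invl h]) (t @ [h, invl h])" by simp
  also have "vsb_eq n (t @ [h, invl h]) (t @ [])"
    by (rule E_app[OF E_refl[OF tA]]) (use E_letter_inv[OF assms(2)] in auto)
  finally show ?thesis by simp
qed

lemma E_ste: "i \<in> idx n \<Longrightarrow> vsb_eq n [MG KSig i, MG KTau i, MSigInv i] [MG KTau i]"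
  using E_conj_helper[of n "MG KSig i" "[MG KTau i]"] E_st unfolding U_def by auto

lemma E_far_conj: "i \<in> idx n \<Longrightarrow> j \<in> idx n \<Longrightarrow> far i j \<Longrightarrow> h \<in> {KSig, KV} \<Longrightarrow>
  vsb_eq n [MG h j, MG KTau i, invl (MG h j)] [MG KTau i]"
  using E_conj_helper[of n "MG h j" "[MG KTau i]"] E_far[of j n i h KTau] unfolding U_def
  by (auto simp: far_def)

lemma E_far_conj2: "i \<in> idx n \<Longrightarrow> j \<in> idx n \<Longrightarrow> far i j \<Longrightarrow>
  vsb_eq n [MSigInv j, MG KTau i, MG KSig j] [MG KTau i]"
proof -
  assume a: "i \<in> idx n" "j \<in> idx n" "far i j"
  have "vsb_eq n [MSigInv j, MG KTau i, MG KSig j] [MSigInv j, MG KSig j, MG KTau i]"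
    using E_app[OF E_refl[of "[MSigInv j]"] E_far[of i n j KTau KSig]] a alph_Inv by simp
  also have "vsb_eq n [MSigInv j, MG KSig j, MG KTau i] [MG KTau i]"
    using E_app[OF E_sinv2[of j n] E_refl[of "[MG KTau i]"]] a alph_MG by simp
  finally show ?thesis .
qed

lemma E_sst_conj: "i \<in> idx n \<Longrightarrow> j \<in> idx n \<Longrightarrow> adj i j \<Longrightarrow>
   vsb_eq n [MG KSig i, MG KSig j, MG KTau i, MSigInv j, MSigInv i] [MG KTau j]"
proof -
  assume a: "i \<in> idx n" "j \<in> idx n" "adj i j"
  have A: "set [MSigInv j, MSigInv i] \<subseteq> vsb_alph n" "set [MG KTau j, MG KSig i] \<subseteq> vsb_alph n"
    "set [MSigInv i] \<subseteq> vsb_alph n" "set [MG KTau j] \<subseteq> vsb_alph n"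
    using a alph_Inv alph_MG by auto
  have "vsb_eq n ([MG KSig i, MG KSig j, MG KTau i] @ [MSigInv j, MSigInv i])
                 ([MG KTau j, MG KSig i, MG KSig j] @ [MSigInv j, MSigInv i])"
    by (rule E_app[OF E_sst[OF a] E_refl[OF A(1)]])
  also have "vsb_eq n ([MG KTau j, MG KSig i, MG KSig j] @ [MSigInv j, MSigInv i])
                 ([MG KTau j, MG KSig i] @ [] @ [MSigInv i])"
    using E_app[OF E_refl[OF A(2)] E_app[OF E_sinv1[OF a(2)] E_refl[OF A(3)]]] by simp
  also have "vsb_eq n ([MG KTau j, MG KSig i] @ [] @ [MSigInv i]) ([MG KTau j] @ [])"
    using E_app[OF E_refl[OF A(4)] E_sinv1[OF a(1)]] by simp
  finally show ?thesis by simp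
qed

section \<open>State machine\<close>

type_synonym X = "mgen list set"
type_synonym PT = "X \<Rightarrow> X \<Rightarrow> (X \<times> bool) list"

definition cls :: "nat \<Rightarrow> mgen list \<Rightarrow> X" where "cls n w = {w'. vsb_eq n w w'}"

lemma cls_eq: "vsb_eq n w w' \<Longrightarrow> cls n w = cls n w'"
  unfolding cls_def using E_sym E_trans by blast
lemma cls_mem: "set w \<subseteq> vsb_alph n \<Longrightarrow> w \<in> cls n w"
  unfolding cls_def using E_refl by blast
lemma mem_cls: "a \<in> cls n w \<Longrightarrow> vsb_eq n w a" unfolding cls_def by blast
lemma cls_E: "cls n w = cls n w' \<Longrightarrow> set w \<subseteq> vsb_alph n \<Longrightarrow> vsb_eq n w w'"
  using cls_mem mem_cls E_sym by metis

definition Ind :: "nat \<Rightarrow> X \<Rightarrow> X \<Rightarrow> bool" where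
  "Ind n x y \<longleftrightarrow> x \<noteq> y \<and> (\<forall>a\<in>x. \<forall>b\<in>y. vsb_eq n (a@b) (b@a))"
lemma Ind_sym: "Ind n x y \<Longrightarrow> Ind n y x" unfolding Ind_def using E_sym by blast

definition D :: "nat \<Rightarrow> X \<Rightarrow> X \<Rightarrow> bool" where "D n a b \<longleftrightarrow> a = b \<or> \<not> Ind n a b"

definition appr :: "X \<times> bool \<Rightarrow> (X \<times> bool) list \<Rightarrow> (X \<times> bool) list" where
  "appr z r = (if r \<noteq> [] \<and> last r = (fst z, \<not> snd z) then butlast r else r @ [z])"

definition red :: "('a \<times> bool) list \<Rightarrow> bool" where
  "red r \<longleftrightarrow> (\<forall>xs x y ys. r = xs @ x # y # ys \<longrightarrow> \<not>(fst x = fst y \<and> snd x \<noteq> snd y))"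

lemma red_butlast: "red r \<Longrightarrow> red (butlast r)"
  unfolding red_def
proof (intro allI impI)
  fix xs x y ys
  assume r: "\<forall>xs x y ys. r = xs @ x # y # ys \<longrightarrow> \<not> (fst x = fst y \<and> snd x \<noteq> snd y)"
    and b: "butlast r = xs @ x # y # ys"
  have "r \<noteq> []" using b by auto
  hence "r = xs @ x # y # (ys @ [last r])" using b append_butlast_last_id by (metis append_Cons append_assoc)
  thus "\<not> (fst x = fst y \<and> snd x \<noteq> snd y)" using r by blast
qed

lemma red_snoc:
  assumes "red r" "r \<noteq> [] \<Longrightarrow> \<not>(fst (last r) = fst z \<and> snd (last r) \<noteq> snd z)"
  shows "red (r @ [z])"
  unfolding red_def
proof (intro allI impI)
  fix xs x y ys
  assume e: "r @ [z] = xs @ x # y # ys"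
  show "\<not> (fst x = fst y \<and> snd x \<noteq> snd y)"
  proof (cases ys rule: rev_cases)
    case Nil
    hence "r = xs @ [x]" "y = z" using e by auto
    thus ?thesis using assms(2) by auto
  next
    case (snoc ys' w)
    hence "r = xs @ x # y # ys'" using e by auto
    thus ?thesis using assms(1) unfolding red_def by blast
  qed
qed

lemma red_appr: "red r \<Longrightarrow> red (appr z r)"
proof (cases "r \<noteq> [] \<and> last r = (fst z, \<not> snd z)")
  case True
  assume "red r" thus ?thesis using True by (simp add: appr_def red_butlast)
next
  case False
  assume rr: "red r"
  have "appr z r = r @ [z]" using False unfolding appr_def by (rule if_not_P)
  moreover have "red (r @ [z])"
  proof (rule red_snoc[OF rr])
    assume "r \<noteq> []"
    thus "\<not> (fst (last r) = fst z \<and> snd (last r) \<noteq> snd z)" using False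
      by (cases "last r", cases z) auto
  qed
  ultimately show ?thesis by simp
qed

lemma appr_inv: "red r \<Longrightarrow> appr (x,c) (appr (x, \<not> c) r) = r"
proof (cases "r \<noteq> [] \<and> last r = (x, c)")
  case True
  assume rr: "red r"
  have 1: "appr (x, \<not> c) r = butlast r" using True by (simp add: appr_def)
  have "\<not> (butlast r \<noteq> [] \<and> last (butlast r) = (x, \<not> c))"
  proof
    assume h: "butlast r \<noteq> [] \<and> last (butlast r) = (x, \<not> c)"
    have "r = butlast (butlast r) @ last (butlast r) # last r # []"
      using h True by (metis append_butlast_last_id append_Cons append_assoc self_append_conv2)
    thus False using rr h True unfolding red_def by (metis fst_conv snd_conv)
  qed
  hence "appr (x,c) (butlast r) = butlast r @ [(x,c)]" unfolding appr_def fst_conv snd_conv by (rule if_not_P)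
  thus ?thesis using 1 True by (metis append_butlast_last_id)
next
  case False
  hence "appr (x, \<not> c) r = r @ [(x, \<not> c)]" by (auto simp: appr_def)
  thus ?thesis by (simp add: appr_def)
qed

definition upd :: "nat \<Rightarrow> X \<Rightarrow> bool \<Rightarrow> PT \<Rightarrow> PT" where
  "upd n x c p = (\<lambda>a b. if (x = a \<or> x = b) \<and> D n a b then appr (x,c) (p a b) else p a b)"

lemma upd_inv: "\<forall>a b. red (p a b) \<Longrightarrow> upd n x c (upd n x (\<not> c) p) = p"
  unfolding upd_def by (rule ext)+ (auto simp: appr_inv)

lemma upd_red: "\<forall>a b. red (p a b) \<Longrightarrow> \<forall>a b. red (upd n x c p a b)"
  unfolding upd_def by (auto simp: red_appr)

lemma upd_comm: "x = y \<or> Ind n x y \<Longrightarrow> upd n y c (upd n x c p) = upd n x c (upd n y c p)"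
proof (cases "x = y")
  case False
  assume "x = y \<or> Ind n x y"
  hence I: "Ind n x y" "Ind n y x" using False Ind_sym by auto
  have "\<not> ((x = a \<or> x = b) \<and> (y = a \<or> y = b) \<and> D n a b)" for a b
    using I False unfolding D_def by auto
  thus ?thesis unfolding upd_def by (intro ext) auto
qed simp

fun ulet :: "kind \<Rightarrow> nat \<Rightarrow> bool \<Rightarrow> mgen list" where
  "ulet KSig i False = [MG KSig i]" | "ulet KSig i True = [MSigInv i]"
| "ulet KV i c = [MG KV i]" | "ulet KTau i c = []"

definition conjw :: "mgen list \<Rightarrow> nat \<Rightarrow> mgen list" where "conjw \<beta> i = \<beta> @ [MG KTau i] @ inv \<beta>"

fun stepL :: "nat \<Rightarrow> gletter \<Rightarrow> mgen list \<times> PT \<Rightarrow> mgen list \<times> PT" where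
  "stepL n (k,i,c) (\<beta>,p) = (if k = KTau then (\<beta>, upd n (cls n (conjw \<beta> i)) c p) else (\<beta> @ ulet k i c, p))"

definition F :: "nat \<Rightarrow> gletter list \<Rightarrow> mgen list \<times> PT \<Rightarrow> mgen list \<times> PT" where
  "F n g s = fold (stepL n) g s"

lemma F_simps[simp]: "F n [] s = s" "F n (a#g) s = F n g (stepL n a s)" "F n (g@h) s = F n h (F n g s)"
  unfolding F_def by auto

definition good :: "nat \<Rightarrow> mgen list \<times> PT \<Rightarrow> bool" where
  "good n s \<longleftrightarrow> set (fst s) \<subseteq> U n \<and> (\<forall>a b. red (snd s a b))"
definition seq :: "nat \<Rightarrow> mgen list \<times> PT \<Rightarrow> mgen list \<times> PT \<Rightarrow> bool" where
  "seq n s s' \<longleftrightarrow> vsb_eq n (fst s) (fst s') \<and> snd s = snd s'"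

lemma vsg_alph_idx: "(k,i,c) \<in> vsg_alph n \<Longrightarrow> i \<in> idx n" unfolding vsg_alph_def by auto

lemma ulet_U: "i \<in> idx n \<Longrightarrow> set (ulet k i c) \<subseteq> U n"
  by (cases k; cases c) (auto simp: U_def)

lemma good_step: "good n s \<Longrightarrow> g \<in> vsg_alph n \<Longrightarrow> good n (stepL n g s)"
proof -
  assume a: "good n s" "g \<in> vsg_alph n"
  obtain k i c where g: "g = (k,i,c)" by (cases g) auto
  obtain \<beta> p where s: "s = (\<beta>,p)" by (cases s) auto
  have i: "i \<in> idx n" using a g vsg_alph_idx by blast
  show ?thesis using a i ulet_U[OF i, of k c] upd_red unfolding g s good_def by auto
qed

lemma good_F: "set g \<subseteq> vsg_alph n \<Longrightarrow> good n s \<Longrightarrow> good n (F n g s)"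
  by (induction g arbitrary: s) (auto simp: good_step)

lemma conjw_cong: "set \<beta> \<subseteq> U n \<Longrightarrow> set \<beta>' \<subseteq> U n \<Longrightarrow> vsb_eq n \<beta> \<beta>' \<Longrightarrow> i \<in> idx n \<Longrightarrow>
   cls n (conjw \<beta> i) = cls n (conjw \<beta>' i)"
  unfolding conjw_def
  by (rule cls_eq, rule E_app, assumption, rule E_app[OF E_refl E_inv_cong]) (auto simp: alph_MG)

lemma seq_step: "good n s \<Longrightarrow> good n s' \<Longrightarrow> seq n s s' \<Longrightarrow> g \<in> vsg_alph n \<Longrightarrow>
   seq n (stepL n g s) (stepL n g s')"
proof -
  assume a: "good n s" "good n s'" "seq n s s'" "g \<in> vsg_alph n"
  obtain k i c where g: "g = (k,i,c)" by (cases g) auto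
  obtain \<beta> p where s: "s = (\<beta>,p)" by (cases s) auto
  obtain \<beta>' p' where s': "s' = (\<beta>',p')" by (cases s') auto
  have i: "i \<in> idx n" using a g vsg_alph_idx by blast
  have E: "vsb_eq n \<beta> \<beta>'" "p = p'" "set \<beta> \<subseteq> U n" "set \<beta>' \<subseteq> U n"
    using a unfolding s s' seq_def good_def by auto
  show ?thesis
  proof (cases "k = KTau")
    case True thus ?thesis using conjw_cong[OF E(3,4,1) i] E unfolding g s s' seq_def by simp
  next
    case False
    have "vsb_eq n (\<beta> @ ulet k i c) (\<beta>' @ ulet k i c)"
      using E(1) ulet_U[OF i, of k c] U_alph by (intro E_app E_refl) auto
    thus ?thesis using False E unfolding g s s' seq_def by simp
  qed
qed

lemma seq_F: "set g \<subseteq> vsg_alph n \<Longrightarrow> good n s \<Longrightarrow> good n s' \<Longrightarrow> seq n s s' \<Longrightarrow> seq n (F n g s) (F n g s')"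
  by (induction g arbitrary: s s') (auto simp: seq_step good_step)

lemma seq_refl: "good n s \<Longrightarrow> seq n s s"
  unfolding good_def seq_def using U_alph E_refl by blast
lemma seq_sym: "seq n s s' \<Longrightarrow> seq n s' s" unfolding seq_def using E_sym by auto
lemma seq_trans: "seq n s s' \<Longrightarrow> seq n s' s'' \<Longrightarrow> seq n s s''" unfolding seq_def using E_trans by auto

section \<open>Invariance under the relations\<close>

definition pos :: "kind \<times> nat \<Rightarrow> gletter" where "pos = (\<lambda>(k,i). (k,i,False))"

lemma F_pure: "\<forall>(k,i)\<in>set l. k \<noteq> KTau \<Longrightarrow> F n (map pos l) (\<beta>,p) = (\<beta> @ map mg l, p)"
proof (induction l arbitrary: \<beta>)
  case Nil thus ?case by simp
next
  case (Cons a l)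
  obtain k i where a: "a = (k,i)" by (cases a) auto
  have "k \<noteq> KTau" using Cons.prems a by auto
  hence "stepL n (pos a) (\<beta>,p) = (\<beta> @ [mg a], p)" unfolding a pos_def mg_def by (cases k) auto
  thus ?case using Cons by simp
qed

lemma cls_conj: "set \<beta> \<subseteq> U n \<Longrightarrow> vsb_eq n a b \<Longrightarrow> cls n (\<beta> @ a @ inv \<beta>) = cls n (\<beta> @ b @ inv \<beta>)"
proof -
  assume a: "set \<beta> \<subseteq> U n" "vsb_eq n a b"
  have "set (inv \<beta>) \<subseteq> vsb_alph n" "set \<beta> \<subseteq> vsb_alph n" using inv_U[OF a(1)] a(1) U_alph by blast+
  thus ?thesis by (intro cls_eq E_app[OF E_refl E_app[OF a(2) E_refl]])
qed

lemma good_A: "good n (\<beta>,p) \<Longrightarrow> set \<beta> \<subseteq> vsb_alph n" unfolding good_def using U_alph by auto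

lemma conjw_comm: "set \<beta> \<subseteq> U n \<Longrightarrow> i \<in> idx n \<Longrightarrow> j \<in> idx n \<Longrightarrow> far i j \<Longrightarrow>
  cls n (conjw \<beta> i) = cls n (conjw \<beta> j) \<or> Ind n (cls n (conjw \<beta> i)) (cls n (conjw \<beta> j))"
proof -
  assume a: "set \<beta> \<subseteq> U n" "i \<in> idx n" "j \<in> idx n" "far i j"
  have bA: "set \<beta> \<subseteq> vsb_alph n" "set (inv \<beta>) \<subseteq> vsb_alph n" using a U_alph inv_U by blast+
  have key: "vsb_eq n (conjw \<beta> i @ conjw \<beta> j) (\<beta> @ [MG KTau i, MG KTau j] @ inv \<beta>)"
    if "i \<in> idx n" "j \<in> idx n" for i j
  proof -
    have "vsb_eq n ((\<beta> @ [MG KTau i]) @ (inv \<beta> @ \<beta>) @ ([MG KTau j] @ inv \<beta>))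
                   ((\<beta> @ [MG KTau i]) @ [] @ ([MG KTau j] @ inv \<beta>))"
      by (rule E_app[OF E_refl E_app[OF _ E_refl]]) (use that bA alph_MG E_inv[OF a(1)] in auto)
    thus ?thesis unfolding conjw_def by simp
  qed
  have sw: "vsb_eq n (\<beta> @ [MG KTau i, MG KTau j] @ inv \<beta>) (\<beta> @ [MG KTau j, MG KTau i] @ inv \<beta>)"
    by (rule E_app[OF E_refl E_app[OF E_far E_refl]]) (use a bA in auto)
  have "vsb_eq n (x@y) (y@x)" if "x \<in> cls n (conjw \<beta> i)" "y \<in> cls n (conjw \<beta> j)" for x y
  proof -
    have xy: "vsb_eq n (x@y) (conjw \<beta> i @ conjw \<beta> j)"
      using that mem_cls E_sym E_app by blast
    have yx: "vsb_eq n (conjw \<beta> j @ conjw \<beta> i) (y@x)"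
      using that mem_cls E_app by blast
    have "vsb_eq n (x@y) (\<beta> @ [MG KTau i, MG KTau j] @ inv \<beta>)" using xy key[OF a(2,3)] E_trans by blast
    also note sw
    also have "vsb_eq n (\<beta> @ [MG KTau j, MG KTau i] @ inv \<beta>) (conjw \<beta> j @ conjw \<beta> i)"
      using key[OF a(3,2)] E_sym by blast
    also note yx
    finally show ?thesis .
  qed
  thus ?thesis unfolding Ind_def by blast
qed

lemma rel_basic:
  assumes "(l0,r0) \<in> basic_rels n" "good n (\<beta>,p)"
  shows "seq n (F n (map pos l0) (\<beta>,p)) (F n (map pos r0) (\<beta>,p))"
proof -
  have bU: "set \<beta> \<subseteq> U n" using assms(2) unfolding good_def by auto
  have bA: "set \<beta> \<subseteq> vsb_alph n" using good_A[OF assms(2)] .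
  have pure: "seq n (F n (map pos l0) (\<beta>,p)) (F n (map pos r0) (\<beta>,p))"
    if "\<forall>(k,i)\<in>set l0. k \<noteq> KTau" "\<forall>(k,i)\<in>set r0. k \<noteq> KTau"
    using that F_pure E_app[OF E_refl[OF bA] E_basic[OF assms(1)]] unfolding seq_def by simp
  have bvv: "vsb_eq n (\<beta> @ [MG KV i, MG KV i]) \<beta>" if "i \<in> idx n" for i
    using E_app[OF E_refl[OF bA] E_vv[OF that]] by simp
  from assms(1) consider
      (c1) i where "l0 = [(KV,i),(KV,i)]" "r0 = []" "i \<in> idx n"
    | (c2) i where "l0 = [(KSig, i), (KTau, i)]" "r0 = [(KTau, i), (KSig, i)]" "i \<in> idx n"
    | (c3) i j where "l0 = [(KSig, i), (KSig, j), (KSig, i)]" "r0 = [(KSig, j), (KSig, i), (KSig, j)]"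
         "i \<in> idx n" "j \<in> idx n" "adj i j"
    | (c4) i j where "l0 = [(KV, i), (KV, j), (KV, i)]" "r0 = [(KV, j), (KV, i), (KV, j)]"
         "i \<in> idx n" "j \<in> idx n" "adj i j"
    | (c5) i j where "l0 = [(KV, i), (KSig, j), (KV, i)]" "r0 = [(KV, j), (KSig, i), (KV, j)]"
         "i \<in> idx n" "j \<in> idx n" "adj i j"
    | (c6) i j where "l0 = [(KV, i), (KTau, j), (KV, i)]" "r0 = [(KV, j), (KTau, i), (KV, j)]"
         "i \<in> idx n" "j \<in> idx n" "adj i j"
    | (c7) i j where "l0 = [(KSig, i), (KSig, j), (KTau, i)]" "r0 = [(KTau, j), (KSig, i), (KSig, j)]"
         "i \<in> idx n" "j \<in> idx n" "adj i j"
    | (c8) g h i j where "l0 = [(g, i), (h, j)]" "r0 = [(h, j), (g, i)]"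
         "i \<in> idx n" "j \<in> idx n" "far i j"
    unfolding basic_rels_def by (elim UnE CollectE exE conjE; simp only: prod.inject; blast)
  thus ?thesis
  proof cases
    case c1 thus ?thesis using pure by auto
  next
    case c3 thus ?thesis using pure by auto
  next
    case c4 thus ?thesis using pure by auto
  next
    case c5 thus ?thesis using pure by auto
  next
    case c2
    have h: "cls n (\<beta> @ [MG KSig i, MG KTau i, MSigInv i] @ inv \<beta>) = cls n (\<beta> @ [MG KTau i] @ inv \<beta>)"
      by (rule cls_conj[OF bU E_ste[OF c2(3)]])
    show ?thesis using h c2 E_refl[of "\<beta> @ [MG KSig i]" n] bA alph_MG
      by (simp add: seq_def conjw_def pos_def)
  next
    case c6
    have h: "cls n (\<beta> @ [MG KV i, MG KTau j, MG KV i] @ inv \<beta>) = cls n (\<beta> @ [MG KV j, MG KTau i, MG KV j] @ inv \<beta>)"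
      by (rule cls_conj[OF bU E_vtv[OF c6(3-5)]])
    have e: "vsb_eq n (\<beta> @ [MG KV i, MG KV i]) (\<beta> @ [MG KV j, MG KV j])"
      using bvv[OF c6(3)] bvv[OF c6(4)] E_trans E_sym by blast
    show ?thesis using h e c6 by (simp add: seq_def conjw_def pos_def)
  next
    case c7
    have h: "cls n (\<beta> @ [MG KSig i, MG KSig j, MG KTau i, MSigInv j, MSigInv i] @ inv \<beta>) = cls n (\<beta> @ [MG KTau j] @ inv \<beta>)"
      by (rule cls_conj[OF bU E_sst_conj[OF c7(3-5)]])
    show ?thesis using h c7 E_refl[of "\<beta> @ [MG KSig i, MG KSig j]" n] bA alph_MG
      by (simp add: seq_def conjw_def pos_def)
  next
    case c8
    have fji: "far j i" using c8 by (auto simp: far_def)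
    consider "g \<noteq> KTau" "h \<noteq> KTau" | "g = KTau" "h = KTau" | "g = KTau" "h \<noteq> KTau" | "g \<noteq> KTau" "h = KTau"
      by blast
    thus ?thesis
    proof cases
      case 1 thus ?thesis using pure c8 by auto
    next
      case 2
      have "upd n (cls n (conjw \<beta> j)) False (upd n (cls n (conjw \<beta> i)) False p)
          = upd n (cls n (conjw \<beta> i)) False (upd n (cls n (conjw \<beta> j)) False p)"
        by (rule upd_comm[OF conjw_comm[OF bU c8(3-5)]])
      thus ?thesis using 2 c8 E_refl[OF bA] by (simp add: seq_def pos_def)
    next
      case 3
      have hk: "h \<in> {KSig, KV}" using 3 by (cases h) auto
      have h: "cls n (\<beta> @ [MG h j, MG KTau i, invl (MG h j)] @ inv \<beta>) = cls n (\<beta> @ [MG KTau i] @ inv \<beta>)"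
        by (rule cls_conj[OF bU E_far_conj[OF c8(3,4,5) hk]])
      have e: "vsb_eq n (\<beta> @ [MG h j]) (\<beta> @ [MG h j])" using E_refl bA alph_MG c8 by auto
      show ?thesis using h e 3 hk c8 by (cases h) (auto simp: seq_def conjw_def pos_def)
    next
      case 4
      have gk: "g \<in> {KSig, KV}" using 4 by (cases g) auto
      have h: "cls n (\<beta> @ [MG g i, MG KTau j, invl (MG g i)] @ inv \<beta>) = cls n (\<beta> @ [MG KTau j] @ inv \<beta>)"
        by (rule cls_conj[OF bU E_far_conj[OF c8(4,3) fji gk]])
      have e: "vsb_eq n (\<beta> @ [MG g i]) (\<beta> @ [MG g i])" using E_refl bA alph_MG c8 by auto
      show ?thesis using h e 4 gk c8 by (cases g) (auto simp: seq_def conjw_def pos_def)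
    qed
  qed
qed

lemma vsg_rels_set: "(l,r) \<in> vsg_rels n \<Longrightarrow> set l \<subseteq> vsg_alph n \<and> set r \<subseteq> vsg_alph n"
  unfolding vsg_rels_def
  apply (elim UnE CollectE exE conjE)
   apply (auto simp: vsg_alph_def)[1]
  apply (drule basic_idx) by (fastforce simp: vsg_alph_def)

lemma rel_vsg: "(l,r) \<in> vsg_rels n \<Longrightarrow> good n s \<Longrightarrow> seq n (F n l s) (F n r s)"
proof -
  assume a: "(l,r) \<in> vsg_rels n" "good n s"
  obtain \<beta> p where s: "s = (\<beta>,p)" by (cases s) auto
  have g: "good n (\<beta>,p)" using a s by simp
  have bA: "set \<beta> \<subseteq> vsb_alph n" using good_A[OF g] .
  have red: "\<forall>a b. red (p a b)" using g unfolding good_def by simp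
  from a(1) consider (canc) k i b where "l = [(k,i,b),(k,i,\<not> b)]" "r = []" "i \<in> idx n"
    | (bas) l0 r0 where "l = map pos l0" "r = map pos r0" "(l0,r0) \<in> basic_rels n"
    unfolding vsg_rels_def pos_def by blast
  thus ?thesis
  proof cases
    case bas thus ?thesis using rel_basic g s by simp
  next
    case canc
    show ?thesis
    proof (cases k)
      case KTau
      have "upd n x (\<not> b) (upd n x b p) = p" for x using upd_inv[OF red, of n x "\<not> b"] by simp
      thus ?thesis using canc KTau s E_refl[OF bA] by (simp add: seq_def)
    next
      case KV
      have "vsb_eq n (\<beta> @ [MG KV i, MG KV i]) (\<beta> @ [])"
        by (rule E_app[OF E_refl[OF bA] E_vv[OF canc(3)]])
      thus ?thesis using canc KV s by (simp add: seq_def)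
    next
      case KSig
      have "vsb_eq n (\<beta> @ [MG KSig i, MSigInv i]) (\<beta> @ [])"
        by (rule E_app[OF E_refl[OF bA] E_sinv1[OF canc(3)]])
      moreover have "vsb_eq n (\<beta> @ [MSigInv i, MG KSig i]) (\<beta> @ [])"
        by (rule E_app[OF E_refl[OF bA] E_sinv2[OF canc(3)]])
      ultimately show ?thesis using canc KSig s by (cases b) (simp_all add: seq_def)
    qed
  qed
qed

lemma vsg_inv: "vsg_eq n g g' \<Longrightarrow> good n s \<Longrightarrow> seq n (F n g s) (F n g' s)"
  unfolding vsg_eq_def
proof (induction arbitrary: s rule: pres_eq.induct)
  case (refl u) thus ?case using seq_refl good_F by blast
next
  case (sym u w) thus ?case using seq_sym by blast
next
  case (trans u v w) thus ?case using seq_trans by blast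
next
  case (step l r x y)
  have gx: "good n (F n x s)" using good_F step by blast
  have lr: "set l \<subseteq> vsg_alph n" "set r \<subseteq> vsg_alph n" using vsg_rels_set[OF step(1)] by auto
  have "seq n (F n l (F n x s)) (F n r (F n x s))" by (rule rel_vsg[OF step(1) gx])
  hence "seq n (F n y (F n l (F n x s))) (F n y (F n r (F n x s)))"
    using seq_F step(3) good_F[OF lr(1) gx] good_F[OF lr(2) gx] by blast
  thus ?case by simp
qed

section \<open>Monoid side\<close>

fun mstep :: "mgen \<Rightarrow> mgen list \<times> mgen list list \<Rightarrow> mgen list \<times> mgen list list" where
  "mstep (MG KTau i) (\<beta>, ys) = (\<beta>, ys @ [conjw \<beta> i])"
| "mstep (MG k i) (\<beta>, ys) = (\<beta> @ [MG k i], ys)"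
| "mstep (MSigInv i) (\<beta>, ys) = (\<beta> @ [MSigInv i], ys)"

definition Mf :: "mgen list \<Rightarrow> mgen list \<times> mgen list list" where "Mf m = fold mstep m ([],[])"

lemma Mf_snoc: "Mf (m @ [c]) = mstep c (Mf m)" unfolding Mf_def by simp
lemma Mf_Nil: "Mf [] = ([],[])" unfolding Mf_def by simp

definition Pm :: "nat \<Rightarrow> mgen list list \<Rightarrow> PT" where
  "Pm n ys = (\<lambda>a b. if D n a b then map (\<lambda>x. (x,False)) (filter (\<lambda>x. x = a \<or> x = b) (map (cls n) ys)) else [])"

lemma upd_Pm: "upd n (cls n y) False (Pm n ys) = Pm n (ys @ [y])"
  unfolding upd_def Pm_def by (intro ext) (auto simp: appr_def last_map)

lemma alph_cases: "c \<in> vsb_alph n \<Longrightarrow> (\<exists>k i. c = MG k i \<and> i \<in> idx n) \<or> (\<exists>i. c = MSigInv i \<and> i \<in> idx n)"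
  unfolding vsb_alph_def by auto

lemma phi_snoc: "phi (m @ [c]) = phi m @ phi_letter c" unfolding phi_def by simp

lemma F_phi: "F n (phi m) ([], \<lambda>a b. []) = (fst (Mf m), Pm n (snd (Mf m)))"
proof (induction m rule: rev_induct)
  case Nil
  have "Pm n [] = (\<lambda>a b. [])" unfolding Pm_def by (intro ext) simp
  thus ?case by (simp add: phi_def Mf_Nil)
next
  case (snoc c m)
  obtain \<beta> ys where M: "Mf m = (\<beta>, ys)" by (cases "Mf m") auto
  show ?case
  proof (cases c)
    case (MG k i)
    thus ?thesis using snoc M upd_Pm by (cases k) (auto simp: phi_snoc Mf_snoc)
  next
    case (MSigInv i)
    thus ?thesis using snoc M by (auto simp: phi_snoc Mf_snoc)
  qed
qed

lemma Mf_props: "set m \<subseteq> vsb_alph n \<Longrightarrow> set (fst (Mf m)) \<subseteq> U n \<and> (\<forall>y\<in>set (snd (Mf m)). set y \<subseteq> vsb_alph n)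
   \<and> vsb_eq n m (concat (snd (Mf m)) @ fst (Mf m))"
proof (induction m rule: rev_induct)
  case Nil thus ?case by (simp add: Mf_Nil E_refl)
next
  case (snoc c m)
  obtain \<beta> ys where M: "Mf m = (\<beta>, ys)" by (cases "Mf m") auto
  have IH: "set \<beta> \<subseteq> U n" "\<forall>y\<in>set ys. set y \<subseteq> vsb_alph n" "vsb_eq n m (concat ys @ \<beta>)"
    using snoc M by auto
  have bA: "set \<beta> \<subseteq> vsb_alph n" "set (inv \<beta>) \<subseteq> vsb_alph n" using IH(1) inv_U U_alph by blast+
  have cA: "c \<in> vsb_alph n" using snoc by auto
  have ext: "vsb_eq n (m @ [c]) ((concat ys @ \<beta>) @ [c])" using E_app[OF IH(3) E_refl[of "[c]"]] cA by simp
  from alph_cases[OF cA] show ?case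
  proof (elim disjE exE conjE)
    fix k i assume c: "c = MG k i" and i: "i \<in> idx n"
    show ?thesis
    proof (cases "k = KTau")
      case True
      have "vsb_eq n ((concat ys @ \<beta> @ [MG KTau i]) @ []) ((concat ys @ \<beta> @ [MG KTau i]) @ (inv \<beta> @ \<beta>))"
        by (rule E_app[OF E_refl E_sym]) (use E_inv[OF IH(1)] IH(2) bA i alph_MG in auto)
      hence "vsb_eq n ((concat ys @ \<beta>) @ [c]) (concat (ys @ [conjw \<beta> i]) @ \<beta>)"
        using c True by (simp add: conjw_def)
      hence "vsb_eq n (m @ [c]) (concat (ys @ [conjw \<beta> i]) @ \<beta>)" using ext E_trans by blast
      moreover have "set (conjw \<beta> i) \<subseteq> vsb_alph n" using bA i alph_MG by (auto simp: conjw_def)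
      ultimately show ?thesis using IH M c True by (simp add: Mf_snoc)
    next
      case False
      have "mstep c (\<beta>,ys) = (\<beta> @ [c], ys)" using c False by (cases k) auto
      moreover have "c \<in> U n" using c False i by (cases k) (auto simp: U_def)
      ultimately show ?thesis using IH ext by (simp add: Mf_snoc M)
    qed
  next
    fix i assume c: "c = MSigInv i" and i: "i \<in> idx n"
    have "c \<in> U n" using c i by (auto simp: U_def)
    thus ?thesis using IH ext c by (simp add: Mf_snoc M)
  qed
qed

section \<open>Projection lemma\<close>

lemma comm_move:
  assumes "set z \<subseteq> vsb_alph n" "\<forall>d\<in>set t. set d \<subseteq> vsb_alph n \<and> Ind n (cls n z) (cls n d)"
  shows "vsb_eq n (concat t @ z) (z @ concat t)"
  using assms(2)
proof (induction t)
  case Nil thus ?case using E_refl[OF assms(1)] by simp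
next
  case (Cons d t)
  have dA: "set d \<subseteq> vsb_alph n" and I: "Ind n (cls n z) (cls n d)" using Cons.prems by auto
  have zd: "vsb_eq n (z @ d) (d @ z)" using I cls_mem[OF assms(1)] cls_mem[OF dA] unfolding Ind_def by blast
  have "vsb_eq n (d @ (concat t @ z)) (d @ (z @ concat t))" by (rule E_app[OF E_refl[OF dA] Cons.IH]) (use Cons.prems in auto)
  also have "vsb_eq n (d @ (z @ concat t)) ((z @ d) @ concat t)"
    using E_app[OF E_sym[OF zd] E_refl[of "concat t" n]] E_set[OF Cons.IH] Cons.prems by auto
  finally show ?case by simp
qed

lemma proj:
  assumes "\<forall>y\<in>set ys. set y \<subseteq> vsb_alph n" "\<forall>z\<in>set zs. set z \<subseteq> vsb_alph n"
    "\<forall>a b. D n a b \<longrightarrow> filter (\<lambda>x. x = a \<or> x = b) (map (cls n) ys) = filter (\<lambda>x. x = a \<or> x = b) (map (cls n) zs)"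
  shows "vsb_eq n (concat ys) (concat zs)"
  using assms
proof (induction ys arbitrary: zs)
  case Nil
  have "zs = []"
  proof (rule ccontr)
    assume "zs \<noteq> []" then obtain z where z: "z \<in> set zs" by (cases zs) auto
    have "D n (cls n z) (cls n z)" by (simp add: D_def)
    with Nil.prems(3) have "filter (\<lambda>x. x = cls n z \<or> x = cls n z) (map (cls n) zs) = []" by force
    with z show False by (auto simp: filter_empty_conv)
  qed
  thus ?case by (simp add: E_refl)
next
  case (Cons y ys)
  define c where "c = cls n y"
  have yA: "set y \<subseteq> vsb_alph n" using Cons.prems by auto
  have "filter (\<lambda>x. x = c \<or> x = c) (map (cls n) zs) = c # filter (\<lambda>x. x = c \<or> x = c) (map (cls n) ys)"
    using Cons.prems(3)[rule_format, of c c] by (simp add: D_def c_def)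
  hence "c \<in> set (filter (\<lambda>x. x = c \<or> x = c) (map (cls n) zs))" by simp
  hence "\<exists>z\<in>set zs. cls n z = c" by auto
  then obtain t1 z t2 where zs: "zs = t1 @ z # t2" and zc: "cls n z = c" and t1c: "\<forall>d\<in>set t1. cls n d \<noteq> c"
    using split_list_first_prop[of zs "\<lambda>z. cls n z = c"] by blast
  have zA: "set z \<subseteq> vsb_alph n" and t1A: "\<forall>d\<in>set t1. set d \<subseteq> vsb_alph n" and t2A: "\<forall>d\<in>set t2. set d \<subseteq> vsb_alph n"
    using Cons.prems(2) zs by auto
  have ind: "Ind n c (cls n d)" if d: "d \<in> set t1" for d
  proof (rule ccontr)
    assume nI: "\<not> Ind n c (cls n d)"
    let ?Q = "\<lambda>x. x = c \<or> x = cls n d"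
    have "D n c (cls n d)" using nI by (simp add: D_def)
    hence H: "filter ?Q (map (cls n) (y#ys)) = filter ?Q (map (cls n) zs)" using Cons.prems(3) by blast
    have "cls n d \<in> set (filter ?Q (map (cls n) t1))" using d by auto
    then obtain e rest where er: "filter ?Q (map (cls n) t1) = e # rest" by (cases "filter ?Q (map (cls n) t1)") auto
    hence "e \<in> set (filter ?Q (map (cls n) t1))" by simp
    hence "e \<noteq> c" using t1c by auto
    moreover have "filter ?Q (map (cls n) zs) = e # rest @ filter ?Q (map (cls n) (z#t2))" using zs er by simp
    moreover have "filter ?Q (map (cls n) (y#ys)) = c # filter ?Q (map (cls n) ys)" by (simp add: c_def)
    ultimately show False using H by simp
  qed
  have filt: "\<forall>a b. D n a b \<longrightarrow> filter (\<lambda>x. x = a \<or> x = b) (map (cls n) ys) = filter (\<lambda>x. x = a \<or> x = b) (map (cls n) (t1 @ t2))"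
  proof (intro allI impI)
    fix a b assume Dab: "D n a b"
    let ?Q = "\<lambda>x. x = a \<or> x = b"
    have H: "filter ?Q (map (cls n) (y#ys)) = filter ?Q (map (cls n) zs)" using Cons.prems(3) Dab by blast
    show "filter ?Q (map (cls n) ys) = filter ?Q (map (cls n) (t1 @ t2))"
    proof (cases "?Q c")
      case True
      have "filter ?Q (map (cls n) t1) = []"
      proof -
        have "\<not> ?Q (cls n d)" if d: "d \<in> set t1" for d
        proof
          assume q: "?Q (cls n d)"
          have ne: "cls n d \<noteq> c" using t1c d by auto
          have I1: "Ind n c (cls n d)" "Ind n (cls n d) c" using ind[OF d] Ind_sym by auto
          show False using True q ne I1 Dab unfolding D_def by auto
        qed
        thus ?thesis by (auto simp: filter_empty_conv)
      qed
      thus ?thesis using H True zs zc by (simp add: c_def)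
    next
      case False
      thus ?thesis using H zs zc by (simp add: c_def)
    qed
  qed
  have IH: "vsb_eq n (concat ys) (concat (t1 @ t2))"
    using Cons.IH[OF _ _ filt] Cons.prems(1) t1A t2A by auto
  have "vsb_eq n (y @ concat ys) (z @ concat (t1 @ t2))"
    by (rule E_app[OF cls_E[OF _ yA] IH]) (use zc c_def in simp)
  also have "vsb_eq n (z @ concat (t1 @ t2)) ((concat t1 @ z) @ concat t2)"
  proof -
    have "vsb_eq n ((z @ concat t1) @ concat t2) ((concat t1 @ z) @ concat t2)"
      by (rule E_app[OF E_sym[OF comm_move] E_refl]) (use zA t1A t2A ind zc in auto)
    thus ?thesis by simp
  qed
  finally show ?case using zs by simp
qed

theorem mainTheorem1:
  fixes n :: nat and u w :: "mgen list"
  assumes "n \<ge> 2"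
    and "set u \<subseteq> vsb_alph n" and "set w \<subseteq> vsb_alph n"
    and "vsg_eq n (phi u) (phi w)"
  shows "vsb_eq n u w"
proof -
  have g0: "good n ([], \<lambda>a b. [])" unfolding good_def red_def by auto
  have S: "seq n (F n (phi u) ([], \<lambda>a b. [])) (F n (phi w) ([], \<lambda>a b. []))"
    by (rule vsg_inv[OF assms(4) g0])
  hence b: "vsb_eq n (fst (Mf u)) (fst (Mf w))" and P: "Pm n (snd (Mf u)) = Pm n (snd (Mf w))"
    unfolding F_phi seq_def by auto
  have Pu: "set (fst (Mf u)) \<subseteq> U n" "\<forall>y\<in>set (snd (Mf u)). set y \<subseteq> vsb_alph n"
    "vsb_eq n u (concat (snd (Mf u)) @ fst (Mf u))" using Mf_props[OF assms(2)] by auto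
  have Pw: "set (fst (Mf w)) \<subseteq> U n" "\<forall>y\<in>set (snd (Mf w)). set y \<subseteq> vsb_alph n"
    "vsb_eq n w (concat (snd (Mf w)) @ fst (Mf w))" using Mf_props[OF assms(3)] by auto
  have "\<forall>a b. D n a b \<longrightarrow> filter (\<lambda>x. x = a \<or> x = b) (map (cls n) (snd (Mf u)))
        = filter (\<lambda>x. x = a \<or> x = b) (map (cls n) (snd (Mf w)))"
  proof (intro allI impI)
    fix a b assume "D n a b"
    hence "map (\<lambda>x. (x,False)) (filter (\<lambda>x. x = a \<or> x = b) (map (cls n) (snd (Mf u))))
        = map (\<lambda>x. (x,False)) (filter (\<lambda>x. x = a \<or> x = b) (map (cls n) (snd (Mf w))))"
      using fun_cong[OF fun_cong[OF P, of a], of b] unfolding Pm_def by simp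
    moreover have "inj (\<lambda>x::X. (x,False))" by (auto intro: injI)
    ultimately show "filter (\<lambda>x. x = a \<or> x = b) (map (cls n) (snd (Mf u)))
        = filter (\<lambda>x. x = a \<or> x = b) (map (cls n) (snd (Mf w)))" using inj_map_eq_map by blast
  qed
  hence C: "vsb_eq n (concat (snd (Mf u))) (concat (snd (Mf w)))" using proj Pu(2) Pw(2) by blast
  have "vsb_eq n u (concat (snd (Mf u)) @ fst (Mf u))" by (rule Pu(3))
  also have "vsb_eq n (concat (snd (Mf u)) @ fst (Mf u)) (concat (snd (Mf w)) @ fst (Mf w))"
    by (rule E_app[OF C b])
  also have "vsb_eq n (concat (snd (Mf w)) @ fst (Mf w)) w" by (rule E_sym[OF Pw(3)])
  finally show ?thesis .
qed

end
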